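(* Let $a<b$ and let $f:[a,b]\rightarrow\mathbb{R}$ be a differentiable mapping in $(a,b)$ such that $f'\in L^1[a,b]$ and $\gamma\le f'(x)\le \Gamma$ for all $x\in [a,b]$, where $\gamma,\Gamma$ are real constants. Assume additionally that $f(a+b-x)=f(x)$ for all $x\in[a,b]$. Put $S=\frac{f(b)-f(a)}{b-a}$. Then for all $x\in[a,\frac{a+b}{2}]$, \[ \left|f(x)-\frac{1}{b-a}\int_{a}^{b}f(t)\,dt\right|\leq \left[\frac{b-a}{4}+\left|x-\frac{3a+b}{4}\right|\right] (S-\gamma) \] and \[ \left|f(x)-\frac{1}{b-a}\int_{a}^{b}f(t)\,dt\right|\leq \left[\frac{b-a}{4}+\left|x-\frac{3a+b}{4}\right|\right] (\Gamma-S). \] *)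

theory Defs
  imports "HOL-Analysis.Analysis"
begin

end

theory Submission
  imports Defs
begin

lemma mvt_bounds:
  fixes f f' :: "real \<Rightarrow> real" and a b \<gamma> \<Gamma> u v :: real
  assumes "continuous_on {a..b} f"
    and "\<And>x. x \<in> {a<..<b} \<Longrightarrow> (f has_real_derivative f' x) (at x)"
    and "\<And>x. x \<in> {a<..<b} \<Longrightarrow> \<gamma> \<le> f' x \<and> f' x \<le> \<Gamma>"
    and "a \<le> u" "u < v" "v \<le> b"
  shows "\<gamma> * (v - u) \<le> f v - f u \<and> f v - f u \<le> \<Gamma> * (v - u)"
proof -
  have c: "continuous_on {u..v} f" using assms(1) by (rule continuous_on_subset) (use assms in auto)
  have d: "\<And>x. u < x \<Longrightarrow> x < v \<Longrightarrow> f differentiable (at x)"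
    using assms(2,4,6) by (meson greaterThanLessThan_iff less_le_trans le_less_trans real_differentiable_def)
  obtain l z where z: "u < z" "z < v" "DERIV f z :> l" "f v - f u = (v - u) * l"
    using MVT[OF assms(5) c d] by blast
  have "l = f' z" using DERIV_unique[OF z(3) assms(2)] z assms by auto
  moreover have "\<gamma> \<le> f' z \<and> f' z \<le> \<Gamma>" using assms(3) z assms by auto
  ultimately show ?thesis using z(4) assms(5)
    by (simp add: mult.commute mult_right_mono)
qed

theorem corollary2p4:
  fixes f f' :: "real \<Rightarrow> real" and a b \<gamma> \<Gamma> :: real
  assumes "a < b"
    and "continuous_on {a..b} f"
    and "\<And>x. x \<in> {a<..<b} \<Longrightarrow> (f has_real_derivative f' x) (at x)"
    and "set_integrable lborel {a..b} f'"
    and "\<And>x. x \<in> {a<..<b} \<Longrightarrow> \<gamma> \<le> f' x \<and> f' x \<le> \<Gamma>"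
    and "\<And>x. x \<in> {a..b} \<Longrightarrow> f (a + b - x) = f x"
    and "x \<in> {a..(a + b) / 2}"
  shows "\<bar>f x - integral {a..b} f / (b - a)\<bar>
           \<le> ((b - a) / 4 + \<bar>x - (3 * a + b) / 4\<bar>) * ((f b - f a) / (b - a) - \<gamma>) \<and>
         \<bar>f x - integral {a..b} f / (b - a)\<bar>
           \<le> ((b - a) / 4 + \<bar>x - (3 * a + b) / 4\<bar>) * (\<Gamma> - (f b - f a) / (b - a))"
proof -
  note mb = mvt_bounds[OF assms(2,3,5)]
  have fab: "f b = f a" using assms(6)[of a] assms(1) by simp
  have lip: "\<bar>f v - f u\<bar> \<le> (- \<gamma>) * \<bar>v - u\<bar> \<and> \<bar>f v - f u\<bar> \<le> \<Gamma> * \<bar>v - u\<bar>"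
    if uv: "u \<in> {a..b}" "v \<in> {a..b}" for u v
  proof -
    have *: "\<bar>f v - f u\<bar> \<le> (- \<gamma>) * (v - u) \<and> \<bar>f v - f u\<bar> \<le> \<Gamma> * (v - u)"
      if "u \<in> {a..b}" "v \<in> {a..b}" "u < v" for u v
    proof -
      have 1: "\<gamma> * (v - u) \<le> f v - f u \<and> f v - f u \<le> \<Gamma> * (v - u)"
        using mb[of u v] that by auto
      have 2: "\<gamma> * ((a+b-u) - (a+b-v)) \<le> f (a+b-u) - f (a+b-v) \<and> f (a+b-u) - f (a+b-v) \<le> \<Gamma> * ((a+b-u) - (a+b-v))"
        using mb[of "a+b-v" "a+b-u"] that by auto
      have "f (a+b-u) = f u" "f (a+b-v) = f v" using assms(6) that by auto
      with 1 2 show ?thesis by (auto simp: abs_if algebra_simps)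
    qed
    consider "u < v" | "u = v" | "v < u" by linarith
    then show ?thesis
    proof cases
      case 1 then show ?thesis using *[OF uv] by simp
    next
      case 2 then show ?thesis by simp
    next
      case 3 then show ?thesis using *[OF uv(2,1)] by (simp add: abs_minus_commute)
    qed
  qed
  define L where "L = (b - a) / 4 + \<bar>x - (3 * a + b) / 4\<bar>"
  have L0: "0 \<le> L" unfolding L_def using assms(1) by simp
  have g0: "\<gamma> \<le> 0" "0 \<le> \<Gamma>" using mb[of a b] assms(1) fab
    by (auto simp: zero_le_mult_iff mult_le_0_iff)
  have bnd: "\<bar>f x - f t\<bar> \<le> (- \<gamma>) * L \<and> \<bar>f x - f t\<bar> \<le> \<Gamma> * L" if t: "t \<in> {a..b}" for t
  proof -
    define t' where "t' = (if t \<le> (a+b)/2 then t else a + b - t)"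
    have t'r: "t' \<in> {a..(a+b)/2}" using t unfolding t'_def by auto
    have ft: "f t = f t'" using assms(6)[of t] t unfolding t'_def by auto
    have d: "\<bar>x - t'\<bar> \<le> L" using t'r assms(7) unfolding L_def by (auto simp: abs_if field_simps)
    have "x \<in> {a..b}" "t' \<in> {a..b}" using t'r assms(7) assms(1) by auto
    from lip[OF this(2,1)] have "\<bar>f x - f t'\<bar> \<le> (- \<gamma>) * \<bar>x - t'\<bar> \<and> \<bar>f x - f t'\<bar> \<le> \<Gamma> * \<bar>x - t'\<bar>" by simp
    moreover have "(- \<gamma>) * \<bar>x - t'\<bar> \<le> (- \<gamma>) * L" "\<Gamma> * \<bar>x - t'\<bar> \<le> \<Gamma> * L"
      using d g0 by (auto intro: mult_left_mono mult_left_mono_neg)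
    ultimately show ?thesis using ft by linarith
  qed
  have fi: "f integrable_on {a..b}" using assms(2) integrable_continuous_interval by blast
  have hi: "((\<lambda>t. f x - f t) has_integral ((b - a) * f x - integral {a..b} f)) {a..b}"
    using has_integral_diff[OF has_integral_const_real[of "f x" a b] integrable_integral[OF fi]] assms(1)
    by simp
  have main: "\<bar>(b - a) * f x - integral {a..b} f\<bar> \<le> B * (b - a)"
    if "0 \<le> B" "\<And>t. t \<in> {a..b} \<Longrightarrow> \<bar>f x - f t\<bar> \<le> B" for B
    using has_integral_bound_real[OF that(1) finite.emptyI hi] that(2) assms(1) by auto
  have eq: "\<bar>f x - integral {a..b} f / (b - a)\<bar> = \<bar>(b - a) * f x - integral {a..b} f\<bar> / (b - a)"
    using assms(1) by (simp add: field_simps abs_divide)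
  have r1: "\<bar>f x - integral {a..b} f / (b - a)\<bar> \<le> (- \<gamma>) * L"
  proof -
    have "0 \<le> (- \<gamma>) * L" using L0 g0 by (simp add: mult_nonpos_nonneg)
    from main[OF this] bnd have "\<bar>(b - a) * f x - integral {a..b} f\<bar> \<le> (- \<gamma>) * L * (b - a)" by blast
    then show ?thesis unfolding eq using assms(1) by (simp add: pos_divide_le_eq)
  qed
  have r2: "\<bar>f x - integral {a..b} f / (b - a)\<bar> \<le> \<Gamma> * L"
    unfolding eq using main[of "\<Gamma> * L"] bnd L0 g0 assms(1)
    by (simp add: pos_divide_le_eq)
  show ?thesis using r1 r2 fab unfolding L_def by (simp add: mult.commute)
qed

end
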